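(* Every open subspace of a $C$-selective space is $C$-selective.
   Context: All spaces are assumed $T_1$. For spaces $Y$, $X$, a map $\varphi:Y\to\mathcal P(X)\setminus\{\emptyset\}$ is lower semicontinuous (l.s.c.) if $\{y:\varphi(y)\cap U\neq\emptyset\}$ is open in $Y$ for every open $U\subseteq X$; a selection is a map $f:Y\to X$ with $f(y)\in\varphi(y)$ for all $y$. $X$ is $Y$-selective if every l.s.c. map from $Y$ to the nonempty closed subsets of $X$ has a continuous selection; $X$ is $C$-selective if it is $Y$-selective for every countable regular space $Y$. *)

theory Defs
  imports "HOL-Analysis.Analysis"
begin

definition lsc_map :: "'b topology \<Rightarrow> 'a topology \<Rightarrow> ('b \<Rightarrow> 'a set) \<Rightarrow> bool" where
  "lsc_map Y X \<phi> \<longleftrightarrow>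
     (\<forall>y\<in>topspace Y. \<phi> y \<subseteq> topspace X \<and> \<phi> y \<noteq> {}) \<and>
     (\<forall>U. openin X U \<longrightarrow> openin Y {y \<in> topspace Y. \<phi> y \<inter> U \<noteq> {}})"

definition selective :: "'b topology \<Rightarrow> 'a topology \<Rightarrow> bool" where
  "selective Y X \<longleftrightarrow>
     (\<forall>\<phi>. lsc_map Y X \<phi> \<and> (\<forall>y\<in>topspace Y. closedin X (\<phi> y)) \<longrightarrow>
        (\<exists>f. continuous_map Y X f \<and> (\<forall>y\<in>topspace Y. f y \<in> \<phi> y)))"

text \<open>Every countable space is homeomorphic to a space whose carrier is a subset
of nat, so countable spaces are represented as topologies on nat.\<close>
definition C_selective :: "'a topology \<Rightarrow> bool" where
  "C_selective X \<longleftrightarrow>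
     (\<forall>Y :: nat topology. t1_space Y \<and> regular_space Y \<longrightarrow> selective Y X)"

end

theory Submission
  imports Defs
begin

lemma clopen_nbhd:
  fixes Y :: "nat topology"
  assumes t1: "t1_space Y" and reg: "regular_space Y" and N: "openin Y N" and y: "y \<in> N"
  obtains K where "closedin Y K" "openin Y K" "y \<in> K" "K \<subseteq> N"
proof -
  have ytop: "y \<in> topspace Y" using N y openin_subset by blast
  have cnt: "countable (topspace Y)" by simp
  have nor: "normal_space Y"
    using reg countable_imp_Lindelof_space[OF cnt] regular_Lindelof_imp_normal_space by blast
  have c1: "closedin Y {y}" using closedin_t1_singleton[OF t1 ytop] .
  have c2: "closedin Y (topspace Y - N)" using N by blast
  have dj: "disjnt {y} (topspace Y - N)" using y by auto
  obtain f where f: "continuous_map Y (top_of_set {0..1::real}) f" "f ` {y} \<subseteq> {0}"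
      "f ` (topspace Y - N) \<subseteq> {1}"
    using Urysohn_lemma[OF nor c1 c2 dj, of 0 1] by auto
  have fc: "continuous_map Y euclideanreal f" using f(1) continuous_map_in_subtopology by blast
  have "countable (f ` topspace Y)" using cnt by blast
  moreover have "uncountable {0<..<1::real}" by (simp add: uncountable_open_interval)
  ultimately have "\<not> {0<..<1::real} \<subseteq> f ` topspace Y" using countable_subset by blast
  then obtain r where r: "0 < r" "r < 1" "r \<notin> f ` topspace Y"
    by (meson greaterThanLessThan_iff subsetI)
  define K where "K = {z \<in> topspace Y. f z \<in> {..<r}}"
  have K2: "K = {z \<in> topspace Y. f z \<in> {..r}}" using r(3) unfolding K_def by force
  show ?thesis
  proof
    show "openin Y K" unfolding K_def by (rule openin_continuous_map_preimage[OF fc]) auto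
    show "closedin Y K" unfolding K2 by (rule closedin_continuous_map_preimage[OF fc]) auto
    show "y \<in> K" using f(2) ytop r unfolding K_def by auto
    show "K \<subseteq> N" using f(3) r unfolding K_def by force
  qed
qed

lemma local_sel:
  fixes Y :: "'b topology" and X :: "'a topology"
  assumes t1X: "t1_space X" and t1Y: "t1_space Y" and sel: "selective Y X"
    and U: "openin X U"
    and lsc: "lsc_map Y (subtopology X U) \<phi>"
    and cl: "\<forall>y\<in>topspace Y. closedin (subtopology X U) (\<phi> y)"
    and y0: "y0 \<in> topspace Y"
  obtains N g where "openin Y N" "y0 \<in> N" "continuous_map Y X g" "\<forall>y\<in>N. g y \<in> \<phi> y"
proof -
  have sub: "\<forall>y\<in>topspace Y. \<phi> y \<subseteq> topspace X \<inter> U \<and> \<phi> y \<noteq> {}"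
    using lsc unfolding lsc_map_def by simp
  then obtain x0 where x0: "x0 \<in> \<phi> y0" using y0 by blast
  have x0X: "x0 \<in> topspace X" using x0 sub y0 by blast
  define \<theta> where "\<theta> y = (if y = y0 then {x0} else X closure_of \<phi> y)" for y
  have "lsc_map Y X \<theta>"
    unfolding lsc_map_def
  proof (intro conjI ballI allI impI)
    fix y assume y: "y \<in> topspace Y"
    show "\<theta> y \<subseteq> topspace X" using x0X by (simp add: \<theta>_def closure_of_subset_topspace)
    show "\<theta> y \<noteq> {}"
      using sub y closure_of_eq_empty[of "\<phi> y" X] by (auto simp: \<theta>_def)
  next
    fix V assume V: "openin X V"
    define A where "A = {y \<in> topspace Y. \<phi> y \<inter> (U \<inter> V) \<noteq> {}}"
    have Ao: "openin Y A" unfolding A_def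
      using lsc V openin_subtopology_Int2 unfolding lsc_map_def by blast
    have eq: "X closure_of \<phi> y \<inter> V \<noteq> {} \<longleftrightarrow> \<phi> y \<inter> (U \<inter> V) \<noteq> {}" if "y \<in> topspace Y" for y
      using openin_Int_closure_of_eq_empty[OF V, of "\<phi> y"] sub that by blast
    have "{y \<in> topspace Y. \<theta> y \<inter> V \<noteq> {}} = (if x0 \<in> V then A else A - {y0})"
      using eq x0 sub y0 unfolding A_def \<theta>_def by (auto, blast)
    moreover have "openin Y (A - {y0})"
      using Ao closedin_t1_singleton[OF t1Y y0] by blast
    ultimately show "openin Y {y \<in> topspace Y. \<theta> y \<inter> V \<noteq> {}}" using Ao by simp
  qed
  moreover have "\<forall>y\<in>topspace Y. closedin X (\<theta> y)"
    using closedin_t1_singleton[OF t1X x0X] by (simp add: \<theta>_def)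
  ultimately obtain g where g: "continuous_map Y X g" "\<forall>y\<in>topspace Y. g y \<in> \<theta> y"
    using sel unfolding selective_def by blast
  define N where "N = {y \<in> topspace Y. g y \<in> U}"
  show ?thesis
  proof
    show "openin Y N" unfolding N_def using openin_continuous_map_preimage[OF g(1) U] .
    show "y0 \<in> N" using g(2) y0 x0 sub unfolding N_def \<theta>_def by force
    show "continuous_map Y X g" by (rule g(1))
    show "\<forall>y\<in>N. g y \<in> \<phi> y"
    proof
      fix y assume y: "y \<in> N"
      show "g y \<in> \<phi> y"
      proof (cases "y = y0")
        case True then show ?thesis using g(2) y x0 unfolding N_def \<theta>_def by auto
      next
        case False
        obtain T where T: "closedin X T" "\<phi> y = T \<inter> U"
          using cl y unfolding N_def closedin_subtopology by blast
        have "X closure_of \<phi> y \<subseteq> T" using T by (simp add: closure_of_minimal)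
        moreover have "g y \<in> X closure_of \<phi> y" "g y \<in> U" using g(2) y False unfolding N_def \<theta>_def by auto
        ultimately show ?thesis using T(2) by blast
      qed
    qed
  qed
qed

theorem mainTheorem12:
  fixes X :: "'a topology" and U :: "'a set"
  assumes "t1_space X" and "C_selective X" and "openin X U"
  shows "C_selective (subtopology X U)"
  unfolding C_selective_def selective_def
proof (intro allI impI)
  fix Y :: "nat topology" and \<phi>
  assume Y: "t1_space Y \<and> regular_space Y"
    and H: "lsc_map Y (subtopology X U) \<phi> \<and> (\<forall>y\<in>topspace Y. closedin (subtopology X U) (\<phi> y))"
  have sel: "selective Y X" using assms(2) Y unfolding C_selective_def by blast
  have sub: "\<forall>y\<in>topspace Y. \<phi> y \<subseteq> topspace X \<inter> U \<and> \<phi> y \<noteq> {}"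
    using H unfolding lsc_map_def by simp
  have "\<forall>n\<in>topspace Y. \<exists>K g. closedin Y K \<and> openin Y K \<and> n \<in> K \<and> continuous_map Y X g
           \<and> (\<forall>y\<in>K. g y \<in> \<phi> y)"
  proof
    fix n assume n: "n \<in> topspace Y"
    obtain N g where Ng: "openin Y N" "n \<in> N" "continuous_map Y X g" "\<forall>y\<in>N. g y \<in> \<phi> y"
      using local_sel[OF assms(1) _ sel assms(3) _ _ n] Y H by blast
    obtain K where "closedin Y K" "openin Y K" "n \<in> K" "K \<subseteq> N"
      using clopen_nbhd[OF _ _ Ng(1,2)] Y by blast
    then show "\<exists>K g. closedin Y K \<and> openin Y K \<and> n \<in> K \<and> continuous_map Y X g
           \<and> (\<forall>y\<in>K. g y \<in> \<phi> y)" using Ng by blast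
  qed
  then obtain K g where Kg: "\<And>n. n \<in> topspace Y \<Longrightarrow> closedin Y (K n) \<and> openin Y (K n) \<and> n \<in> K n
       \<and> continuous_map Y X (g n) \<and> (\<forall>y\<in>K n. g n y \<in> \<phi> y)"
    by metis
  define c where "c y = (LEAST n. n \<in> topspace Y \<and> y \<in> K n)" for y
  define f where "f y = g (c y) y" for y
  have c1: "c y \<in> topspace Y \<and> y \<in> K (c y)" if "y \<in> topspace Y" for y
    unfolding c_def by (rule LeastI[of _ y]) (use that Kg in blast)
  have c2: "\<not> (k \<in> topspace Y \<and> y \<in> K k)" if "k < c y" for y k
    using that unfolding c_def by (rule not_less_Least)
  have fphi: "f y \<in> \<phi> y" if "y \<in> topspace Y" for y
    using c1[OF that] Kg unfolding f_def by blast
  define C where "C n = K n - (\<Union>k\<in>{k. k < n \<and> k \<in> topspace Y}. K k)" for n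
  have Co: "openin Y (C n)" if "n \<in> topspace Y" for n
    unfolding C_def
  proof (rule openin_diff)
    show "openin Y (K n)" using Kg that by blast
    show "closedin Y (\<Union>k\<in>{k. k < n \<and> k \<in> topspace Y}. K k)"
      by (rule closedin_Union) (use Kg in auto)
  qed
  have Cc: "y \<in> C n \<longleftrightarrow> c y = n" if "y \<in> topspace Y" "n \<in> topspace Y" for y n
  proof
    assume "y \<in> C n"
    then have a: "y \<in> K n" and b: "\<forall>k<n. k \<in> topspace Y \<longrightarrow> y \<notin> K k" unfolding C_def by auto
    have "c y \<le> n" unfolding c_def using a that(2) by (simp add: Least_le)
    moreover have "\<not> c y < n" using b c1[OF that(1)] by blast
    ultimately show "c y = n" by simp
  next
    assume "c y = n"
    then show "y \<in> C n" using c1[OF that(1)] c2[of _ y] unfolding C_def by auto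
  qed
  have "continuous_map Y X f"
    unfolding continuous_map_def
  proof (intro conjI allI impI)
    show "f \<in> topspace Y \<rightarrow> topspace X" using fphi sub by blast
  next
    fix V assume V: "openin X V"
    have "{y \<in> topspace Y. f y \<in> V} = (\<Union>n\<in>topspace Y. C n \<inter> {y \<in> topspace Y. g n y \<in> V})"
      using Cc c1 unfolding f_def by auto
    moreover have "openin Y (\<Union>n\<in>topspace Y. C n \<inter> {y \<in> topspace Y. g n y \<in> V})"
      using Co Kg openin_continuous_map_preimage[OF _ V] by blast
    ultimately show "openin Y {y \<in> topspace Y. f y \<in> V}" by simp
  qed
  then have "continuous_map Y (subtopology X U) f"
    using continuous_map_in_subtopology fphi sub by blast
  then show "\<exists>f. continuous_map Y (subtopology X U) f \<and> (\<forall>y\<in>topspace Y. f y \<in> \<phi> y)"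
    using fphi by blast
qed

end
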